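(* A finite simple graph $G$ is a caterpillar forest (every connected component is a caterpillar, i.e. a tree in which removing all leaves leaves a path) if and only if it admits a $CF$-free circular ordering.
   Context: A circular ordering of a finite set is obtained by placing its elements at distinct points of a circle. A circularly ordered graph is a graph with a circular ordering of its vertices; isomorphism means a graph isomorphism preserving circular orderings; induced circularly ordered subgraphs are induced subgraphs with the restricted ordering. A circular ordering $C$ of $V(G)$ is $CF$-free if no induced circularly ordered subgraph of $(G,C)$ is isomorphic to a member of $CF$. $CF$ consists of the following circularly ordered graphs (vertices $v_1,v_2,\dots$ clockwise in this order; listed edges are all edges): the triangle on $v_1,v_2,v_3$; on $v_1,\dots,v_4$: edges $v_1v_2,v_2v_3,v_3v_4,v_4v_1$; edges $v_1v_2,v_2v_4,v_4v_3,v_3v_1$; edges $v_1v_2,v_2v_3,v_3v_4$; edges $v_3v_1,v_1v_4,v_4v_2$. *)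

theory Defs
  imports Main
begin

definition simple_graph :: "'a set \<Rightarrow> ('a \<Rightarrow> 'a \<Rightarrow> bool) \<Rightarrow> bool" where
  "simple_graph V E \<longleftrightarrow> finite V \<and> (\<forall>x y. E x y \<longrightarrow> x \<in> V \<and> y \<in> V)
     \<and> (\<forall>x y. E x y \<longrightarrow> E y x) \<and> (\<forall>x. \<not> E x x)"

definition induced :: "('a \<Rightarrow> 'a \<Rightarrow> bool) \<Rightarrow> 'a set \<Rightarrow> 'a \<Rightarrow> 'a \<Rightarrow> bool" where
  "induced E S = (\<lambda>a b. E a b \<and> a \<in> S \<and> b \<in> S)"

definition connected_graph :: "'a set \<Rightarrow> ('a \<Rightarrow> 'a \<Rightarrow> bool) \<Rightarrow> bool" where
  "connected_graph V E \<longleftrightarrow> (\<forall>x\<in>V. \<forall>y\<in>V. (induced E V)\<^sup>*\<^sup>* x y)"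

definition has_cycle :: "'a set \<Rightarrow> ('a \<Rightarrow> 'a \<Rightarrow> bool) \<Rightarrow> bool" where
  "has_cycle V E \<longleftrightarrow> (\<exists>xs. length xs \<ge> 3 \<and> distinct xs \<and> set xs \<subseteq> V \<and>
     (\<forall>i < length xs. E (xs ! i) (xs ! ((i + 1) mod length xs))))"

definition is_tree :: "'a set \<Rightarrow> ('a \<Rightarrow> 'a \<Rightarrow> bool) \<Rightarrow> bool" where
  "is_tree V E \<longleftrightarrow> V \<noteq> {} \<and> connected_graph V E \<and> \<not> has_cycle V E"

definition leaves :: "'a set \<Rightarrow> ('a \<Rightarrow> 'a \<Rightarrow> bool) \<Rightarrow> 'a set" where
  "leaves V E = {v \<in> V. card {u \<in> V. E v u} = 1}"

text \<open>A path graph (the empty graph is allowed, so that K1 and K2 are caterpillars).\<close>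
definition is_path_graph :: "'a set \<Rightarrow> ('a \<Rightarrow> 'a \<Rightarrow> bool) \<Rightarrow> bool" where
  "is_path_graph V E \<longleftrightarrow> (\<exists>xs. distinct xs \<and> set xs = V \<and>
     (\<forall>a\<in>V. \<forall>b\<in>V. E a b \<longleftrightarrow> (\<exists>i. Suc i < length xs \<and> {a, b} = {xs ! i, xs ! Suc i})))"

definition is_caterpillar :: "'a set \<Rightarrow> ('a \<Rightarrow> 'a \<Rightarrow> bool) \<Rightarrow> bool" where
  "is_caterpillar V E \<longleftrightarrow> is_tree V E \<and>
     is_path_graph (V - leaves V E) (induced E (V - leaves V E))"

definition components :: "'a set \<Rightarrow> ('a \<Rightarrow> 'a \<Rightarrow> bool) \<Rightarrow> 'a set set" where
  "components V E = {{y \<in> V. (induced E V)\<^sup>*\<^sup>* x y} | x. x \<in> V}"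

definition caterpillar_forest :: "'a set \<Rightarrow> ('a \<Rightarrow> 'a \<Rightarrow> bool) \<Rightarrow> bool" where
  "caterpillar_forest V E \<longleftrightarrow> (\<forall>C \<in> components V E. is_caterpillar C (induced E C))"

text \<open>A circular ordering of V is represented by an injective position map pos into nat
  (points read clockwise in increasing order, wrapping around). A list of distinct vertices
  is in clockwise order iff some rotation of it is increasing in pos; this notion is
  invariant under rotating pos, so it only depends on the induced cyclic order.\<close>

definition circular_ordering :: "'a set \<Rightarrow> ('a \<Rightarrow> nat) \<Rightarrow> bool" where
  "circular_ordering V pos \<longleftrightarrow> inj_on pos V"

definition clockwise :: "('a \<Rightarrow> nat) \<Rightarrow> 'a list \<Rightarrow> bool" where
  "clockwise pos xs \<longleftrightarrow> distinct xs \<and>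
     (\<exists>r. sorted_wrt (\<lambda>a b. pos a < pos b) (rotate r xs))"

text \<open>The family CF: (number of vertices k, edge set on indices 0..k-1), vertices
  v_1,...,v_k clockwise correspond to indices 0,...,k-1.\<close>
definition CF :: "(nat \<times> nat set set) set" where
  "CF = {(3, {{0,1},{1,2},{2,0}}),
         (4, {{0,1},{1,2},{2,3},{3,0}}),
         (4, {{0,1},{1,3},{3,2},{2,0}}),
         (4, {{0,1},{1,2},{2,3}}),
         (4, {{2,0},{0,3},{3,1}})}"

definition contains_pattern ::
  "'a set \<Rightarrow> ('a \<Rightarrow> 'a \<Rightarrow> bool) \<Rightarrow> ('a \<Rightarrow> nat) \<Rightarrow> nat \<Rightarrow> nat set set \<Rightarrow> bool" where
  "contains_pattern V E pos k F \<longleftrightarrow> (\<exists>xs. length xs = k \<and> set xs \<subseteq> V \<and> clockwise pos xs \<and>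
     (\<forall>i<k. \<forall>j<k. i \<noteq> j \<longrightarrow> (E (xs ! i) (xs ! j) \<longleftrightarrow> {i, j} \<in> F)))"

definition CF_free :: "'a set \<Rightarrow> ('a \<Rightarrow> 'a \<Rightarrow> bool) \<Rightarrow> ('a \<Rightarrow> nat) \<Rightarrow> bool" where
  "CF_free V E pos \<longleftrightarrow> (\<forall>(k, F) \<in> CF. \<not> contains_pattern V E pos k F)"

end

theory Submission
  imports Defs "HOL-Library.Product_Lexorder"
begin


lemma all4: "(\<forall>i<(4::nat). P i) \<longleftrightarrow> P 0 \<and> P 1 \<and> P 2 \<and> P 3"
  by (auto simp: less_Suc_eq numeral_eq_Suc)

lemma all3: "(\<forall>i<(3::nat). P i) \<longleftrightarrow> P 0 \<and> P 1 \<and> P 2"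
  by (auto simp: less_Suc_eq numeral_eq_Suc)

lemma cw4:
  assumes "distinct [w,x,y,z]"
    and "(pos w < pos x \<and> pos x < pos y \<and> pos y < pos z) \<or>
         (pos x < pos y \<and> pos y < pos z \<and> pos z < pos w) \<or>
         (pos y < pos z \<and> pos z < pos w \<and> pos w < pos x) \<or>
         (pos z < pos w \<and> pos w < pos x \<and> pos x < pos y)"
  shows "clockwise pos [w,x,y,z]"
proof -
  have r: "rotate 1 [w,x,y,z] = [x,y,z,w]" "rotate 2 [w,x,y,z] = [y,z,w,x]"
    "rotate 3 [w,x,y,z] = [z,w,x,y]"
    by (simp_all add: rotate_def eval_nat_numeral)
  show ?thesis unfolding clockwise_def using assms
    apply (intro conjI, simp)
    apply (elim disjE)
    apply (rule exI[of _ 0], simp)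
    apply (rule exI[of _ 1], simp only: r, simp)
    apply (rule exI[of _ 2], simp only: r, simp)
    apply (rule exI[of _ 3], simp only: r, simp)
    done
qed

lemma cw3:
  assumes "distinct [x,y,z]"
    and "(pos x < pos y \<and> pos y < pos z) \<or>
         (pos y < pos z \<and> pos z < pos x) \<or>
         (pos z < pos x \<and> pos x < pos y)"
  shows "clockwise pos [x,y,z]"
proof -
  have r: "rotate 1 [x,y,z] = [y,z,x]" "rotate 2 [x,y,z] = [z,x,y]"
    by (simp_all add: rotate_def eval_nat_numeral)
  show ?thesis unfolding clockwise_def using assms
    apply (intro conjI, simp)
    apply (elim disjE)
    apply (rule exI[of _ 0], simp)
    apply (rule exI[of _ 1], simp only: r, simp)
    apply (rule exI[of _ 2], simp only: r, simp)
    done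
qed

lemma cp4:
  assumes sym: "\<And>a b. E a b \<Longrightarrow> E b a"
    and "clockwise pos [w,x,y,z]" "w \<in> V" "x \<in> V" "y \<in> V" "z \<in> V"
    and "E w x \<longleftrightarrow> {0,1} \<in> F" "E w y \<longleftrightarrow> {0,2} \<in> F" "E w z \<longleftrightarrow> {0,3} \<in> F"
        "E x y \<longleftrightarrow> {1,2} \<in> F" "E x z \<longleftrightarrow> {1,3} \<in> F" "E y z \<longleftrightarrow> {2,3} \<in> F"
  shows "contains_pattern V E pos 4 F"
  unfolding contains_pattern_def
proof (rule exI[of _ "[w,x,y,z]"], intro conjI)
  have s: "E a b \<longleftrightarrow> E b a" for a b using sym by blast
  have c: "{a,b} = {b,a}" for a b :: nat by auto
  show "\<forall>i<4. \<forall>j<4. i \<noteq> j \<longrightarrow> E ([w, x, y, z] ! i) ([w, x, y, z] ! j) = ({i, j} \<in> F)"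
    unfolding all4 using assms(7-12)
    by (simp add: s[of x w] s[of y w] s[of z w] s[of y x] s[of z x] s[of z y] c[of 1 0] c[of 2 0]
      c[of 3 0] c[of 2 1] c[of 3 1] c[of 3 2] eval_nat_numeral insert_commute)
qed (use assms in auto)

lemma cp3:
  assumes sym: "\<And>a b. E a b \<Longrightarrow> E b a"
    and "clockwise pos [x,y,z]" "x \<in> V" "y \<in> V" "z \<in> V"
    and "E x y \<longleftrightarrow> {0,1} \<in> F" "E x z \<longleftrightarrow> {0,2} \<in> F" "E y z \<longleftrightarrow> {1,2} \<in> F"
  shows "contains_pattern V E pos 3 F"
  unfolding contains_pattern_def
proof (rule exI[of _ "[x,y,z]"], intro conjI)
  have s: "E a b \<longleftrightarrow> E b a" for a b using sym by blast
  have c: "{a,b} = {b,a}" for a b :: nat by auto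
  show "\<forall>i<3. \<forall>j<3. i \<noteq> j \<longrightarrow> E ([x, y, z] ! i) ([x, y, z] ! j) = ({i, j} \<in> F)"
    unfolding all3 using assms(6-8)
    by (simp add: s[of y x] s[of z x] s[of z y] c[of 1 0] c[of 2 0]
      c[of 2 1] eval_nat_numeral insert_commute)
qed (use assms in auto)

definition cyc4 :: "('a \<Rightarrow> nat) \<Rightarrow> 'a \<Rightarrow> 'a \<Rightarrow> 'a \<Rightarrow> 'a \<Rightarrow> bool" where
  "cyc4 pos w x y z \<longleftrightarrow> (pos w < pos x \<and> pos x < pos y \<and> pos y < pos z) \<or>
         (pos x < pos y \<and> pos y < pos z \<and> pos z < pos w) \<or>
         (pos y < pos z \<and> pos z < pos w \<and> pos w < pos x) \<or>
         (pos z < pos w \<and> pos w < pos x \<and> pos x < pos y)"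

definition cyc3 :: "('a \<Rightarrow> nat) \<Rightarrow> 'a \<Rightarrow> 'a \<Rightarrow> 'a \<Rightarrow> bool" where
  "cyc3 pos x y z \<longleftrightarrow> (pos x < pos y \<and> pos y < pos z) \<or>
         (pos y < pos z \<and> pos z < pos x) \<or>
         (pos z < pos x \<and> pos x < pos y)"

lemma cyc4_rot: "cyc4 pos w x y z \<Longrightarrow> cyc4 pos x y z w"
  unfolding cyc4_def by auto

lemma cyc6_nat:
  fixes a b c d :: nat
  assumes "a \<noteq> b" "a \<noteq> c" "a \<noteq> d" "b \<noteq> c" "b \<noteq> d" "c \<noteq> d"
  shows "(a<b \<and> b<c \<and> c<d) \<or> (b<c \<and> c<d \<and> d<a) \<or> (c<d \<and> d<a \<and> a<b) \<or> (d<a \<and> a<b \<and> b<c) \<or>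
    (a<b \<and> b<d \<and> d<c) \<or> (b<d \<and> d<c \<and> c<a) \<or> (d<c \<and> c<a \<and> a<b) \<or> (c<a \<and> a<b \<and> b<d) \<or>
    (a<c \<and> c<b \<and> b<d) \<or> (c<b \<and> b<d \<and> d<a) \<or> (b<d \<and> d<a \<and> a<c) \<or> (d<a \<and> a<c \<and> c<b) \<or>
    (a<c \<and> c<d \<and> d<b) \<or> (c<d \<and> d<b \<and> b<a) \<or> (d<b \<and> b<a \<and> a<c) \<or> (b<a \<and> a<c \<and> c<d) \<or>
    (a<d \<and> d<b \<and> b<c) \<or> (d<b \<and> b<c \<and> c<a) \<or> (b<c \<and> c<a \<and> a<d) \<or> (c<a \<and> a<d \<and> d<b) \<or>
    (a<d \<and> d<c \<and> c<b) \<or> (d<c \<and> c<b \<and> b<a) \<or> (c<b \<and> b<a \<and> a<d) \<or> (b<a \<and> a<d \<and> d<c)"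
  using assms by (cases "a < b"; cases "a < c"; cases "a < d"; cases "b < c"; cases "b < d"; cases "c < d") auto

lemma cyc6:
  assumes "pos a \<noteq> pos b" "pos a \<noteq> pos c" "pos a \<noteq> pos d" "pos b \<noteq> pos c"
    "pos b \<noteq> pos d" "pos c \<noteq> pos d"
  shows "cyc4 pos a b c d \<or> cyc4 pos a b d c \<or> cyc4 pos a c b d \<or> cyc4 pos a c d b \<or>
    cyc4 pos a d b c \<or> cyc4 pos a d c b"
  using cyc6_nat[OF assms] unfolding cyc4_def by (elim disjE) simp_all

lemma cyc3_trans: "cyc3 p c z d \<Longrightarrow> cyc3 p c d b \<Longrightarrow> cyc3 p c z b"
  unfolding cyc3_def by linarith
lemma cyc3_irr: "\<not> cyc3 p x x y" "\<not> cyc3 p x y y" "\<not> cyc3 p x y x"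
  unfolding cyc3_def by auto
lemma cyc3_rot: "cyc3 p x y z \<Longrightarrow> cyc3 p y z x"
  unfolding cyc3_def by auto
lemma cyc3_tot: "p x \<noteq> p y \<Longrightarrow> p y \<noteq> p z \<Longrightarrow> p x \<noteq> p z \<Longrightarrow> cyc3 p x y z \<or> cyc3 p x z y"
  unfolding cyc3_def by linarith
lemma cyc3_asym: "cyc3 p x y z \<Longrightarrow> \<not> cyc3 p x z y"
  unfolding cyc3_def by linarith

context
  fixes V :: "'a set" and E :: "'a \<Rightarrow> 'a \<Rightarrow> bool" and pos :: "'a \<Rightarrow> nat"
  assumes sg: "simple_graph V E" and inj: "inj_on pos V" and cf: "CF_free V E pos"
begin

lemma symE: "E a b \<Longrightarrow> E b a" using sg unfolding simple_graph_def by blast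
lemma irrE: "\<not> E a a" using sg unfolding simple_graph_def by blast
lemma EV: "E a b \<Longrightarrow> a \<in> V \<and> b \<in> V" using sg unfolding simple_graph_def by blast

lemma nopat:
  "\<not> contains_pattern V E pos 3 {{0,1},{1,2},{2,0}}"
  "\<not> contains_pattern V E pos 4 {{0,1},{1,2},{2,3},{3,0}}"
  "\<not> contains_pattern V E pos 4 {{0,1},{1,3},{3,2},{2,0}}"
  "\<not> contains_pattern V E pos 4 {{0,1},{1,2},{2,3}}"
  "\<not> contains_pattern V E pos 4 {{2,0},{0,3},{3,1}}"
  using cf unfolding CF_free_def CF_def by simp_all

lemma pneq: "a \<in> V \<Longrightarrow> b \<in> V \<Longrightarrow> a \<noteq> b \<Longrightarrow> pos a \<noteq> pos b"
  using inj by (meson inj_on_eq_iff)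

lemma cw4': "cyc4 pos w x y z \<Longrightarrow> distinct [w,x,y,z] \<Longrightarrow> clockwise pos [w,x,y,z]"
  using cw4 unfolding cyc4_def by metis

lemma no_tri: "E a b \<Longrightarrow> E b c \<Longrightarrow> E a c \<Longrightarrow> False"
proof -
  assume h: "E a b" "E b c" "E a c"
  have d: "a \<noteq> b" "b \<noteq> c" "a \<noteq> c" using h irrE by metis+
  have v: "a \<in> V" "b \<in> V" "c \<in> V" using h EV by auto
  have p: "pos a \<noteq> pos b" "pos b \<noteq> pos c" "pos a \<noteq> pos c" using d v pneq by auto
  have o: "(pos a < pos b \<and> pos b < pos c) \<or> (pos b < pos c \<and> pos c < pos a) \<or> (pos c < pos a \<and> pos a < pos b)
    \<or> (pos a < pos c \<and> pos c < pos b) \<or> (pos c < pos b \<and> pos b < pos a) \<or> (pos b < pos a \<and> pos a < pos c)"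
    using p by (cases "pos a < pos b"; cases "pos b < pos c"; cases "pos a < pos c") auto
  have "clockwise pos [a,b,c] \<or> clockwise pos [a,c,b]"
    using o d by (elim disjE) (simp_all add: cw3)
  then show False
  proof
    assume "clockwise pos [a,b,c]"
    then have "contains_pattern V E pos 3 {{0,1},{1,2},{2,0}}"
      using cp3[where E=E and pos=pos and V=V and x=a and y=b and z=c and F="{{0,1},{1,2},{2,0}}", OF symE] v h by auto
    then show False using nopat(1) by blast
  next
    assume "clockwise pos [a,c,b]"
    then have "contains_pattern V E pos 3 {{0,1},{1,2},{2,0}}"
      using cp3[where E=E and pos=pos and V=V and x=a and y=c and z=b and F="{{0,1},{1,2},{2,0}}", OF symE] v h symE by auto
    then show False using nopat(1) by blast
  qed
qed


lemma mk4:
  assumes "cyc4 pos w x y z" "distinct [w,x,y,z]" "w \<in> V" "x \<in> V" "y \<in> V" "z \<in> V"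
    and "E w x \<longleftrightarrow> {0,1} \<in> F" "E w y \<longleftrightarrow> {0,2} \<in> F" "E w z \<longleftrightarrow> {0,3} \<in> F"
        "E x y \<longleftrightarrow> {1,2} \<in> F" "E x z \<longleftrightarrow> {1,3} \<in> F" "E y z \<longleftrightarrow> {2,3} \<in> F"
  shows "contains_pattern V E pos 4 F"
  using cp4[where E=E and pos=pos and V=V and w=w and x=x and y=y and z=z and F=F, OF symE
      cw4'[OF assms(1,2)]] assms(3-) by blast

lemma no_c4:
  assumes "distinct [a,b,c,d]" "E a b" "E b c" "E c d" "E d a" "\<not> E a c" "\<not> E b d"
  shows False
proof -
  have v: "a \<in> V" "b \<in> V" "c \<in> V" "d \<in> V" using assms EV by auto
  have dd: "b \<noteq> a" "c \<noteq> a" "d \<noteq> a" "c \<noteq> b" "d \<noteq> b" "d \<noteq> c" using assms(1) by auto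
  have s: "E b a" "E c b" "E d c" "E a d" "\<not> E c a" "\<not> E d b" using assms symE by blast+
  have "pos a \<noteq> pos b" "pos a \<noteq> pos c" "pos a \<noteq> pos d" "pos b \<noteq> pos c"
    "pos b \<noteq> pos d" "pos c \<noteq> pos d" using assms(1) v pneq by auto
  from cyc6[where pos=pos and a=a and b=b and c=c and d=d, OF this] show False
  proof (elim disjE)
    assume "cyc4 pos a b c d"
    from mk4[OF this, where F="{{0,1},{1,2},{2,3},{3,0}}"] show False using assms s v dd nopat(2) by (simp add: doubleton_eq_iff)
  next
    assume "cyc4 pos a b d c"
    from mk4[OF this, where F="{{0,1},{1,3},{3,2},{2,0}}"] show False using assms s v dd nopat(3) by (simp add: doubleton_eq_iff)
  next
    assume "cyc4 pos a c b d"
    from mk4[OF cyc4_rot[OF this], where F="{{0,1},{1,3},{3,2},{2,0}}"] show False using assms s v dd nopat(3) by (simp add: doubleton_eq_iff)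
  next
    assume "cyc4 pos a c d b"
    from mk4[OF cyc4_rot[OF cyc4_rot[OF cyc4_rot[OF this]]], where F="{{0,1},{1,3},{3,2},{2,0}}"] show False
      using assms s v dd nopat(3) by (simp add: doubleton_eq_iff)
  next
    assume "cyc4 pos a d b c"
    from mk4[OF cyc4_rot[OF cyc4_rot[OF this]], where F="{{0,1},{1,3},{3,2},{2,0}}"] show False
      using assms s v dd nopat(3) by (simp add: doubleton_eq_iff)
  next
    assume "cyc4 pos a d c b"
    from mk4[OF this, where F="{{0,1},{1,2},{2,3},{3,0}}"] show False using assms s v dd nopat(2) by (simp add: doubleton_eq_iff)
  qed
qed

lemma p4sep:
  assumes "distinct [a,b,c,d]" "E a b" "E b c" "E c d" "\<not> E a c" "\<not> E b d" "\<not> E a d"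
  shows "cyc3 pos b a c \<longleftrightarrow> \<not> cyc3 pos b d c"
proof (rule ccontr)
  assume ne: "\<not> (cyc3 pos b a c \<longleftrightarrow> \<not> cyc3 pos b d c)"
  have v: "a \<in> V" "b \<in> V" "c \<in> V" "d \<in> V" using assms EV by auto
  have dd: "b \<noteq> a" "c \<noteq> a" "d \<noteq> a" "c \<noteq> b" "d \<noteq> b" "d \<noteq> c" using assms(1) by auto
  have s: "E b a" "E c b" "E d c" "\<not> E d a" "\<not> E c a" "\<not> E d b" using assms symE by blast+
  have "pos a \<noteq> pos b" "pos a \<noteq> pos c" "pos a \<noteq> pos d" "pos b \<noteq> pos c"
    "pos b \<noteq> pos d" "pos c \<noteq> pos d" using assms(1) v pneq by auto
  from cyc6[where pos=pos and a=a and b=b and c=c and d=d, OF this] show False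
  proof (elim disjE)
    assume "cyc4 pos a b c d"
    from mk4[OF this, where F="{{0,1},{1,2},{2,3}}"] show False using assms s v dd nopat(4) by (simp add: doubleton_eq_iff)
  next
    assume "cyc4 pos a b d c"
    then show False using ne unfolding cyc4_def cyc3_def by linarith
  next
    assume "cyc4 pos a c b d"
    from mk4[OF cyc4_rot[OF cyc4_rot[OF this]], where F="{{2,0},{0,3},{3,1}}"] show False
      using assms s v dd nopat(5) by (simp add: doubleton_eq_iff)
  next
    assume "cyc4 pos a c d b"
    then show False using ne unfolding cyc4_def cyc3_def by linarith
  next
    assume "cyc4 pos a d b c"
    from mk4[OF cyc4_rot[OF cyc4_rot[OF cyc4_rot[OF this]]], where F="{{2,0},{0,3},{3,1}}"] show False
      using assms s v dd nopat(5) by (simp add: doubleton_eq_iff)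
  next
    assume "cyc4 pos a d c b"
    from mk4[OF cyc4_rot[OF this], where F="{{0,1},{1,2},{2,3}}"] show False using assms s v dd nopat(4) by (simp add: doubleton_eq_iff)
  qed
qed


lemma no_deg2:
  assumes TV: "T \<subseteq> V" and deg: "\<forall>v\<in>T. \<exists>u w. u \<noteq> w \<and> u \<in> T \<and> w \<in> T \<and> E v u \<and> E v w"
  shows "T = {}"
proof (rule ccontr)
  assume "T \<noteq> {}"
  then obtain v where v: "v \<in> T" by auto
  have fin: "finite V" using sg unfolding simple_graph_def by auto
  define Arc where "Arc b c d = (if cyc3 pos c d b then {z\<in>V. cyc3 pos c z b} else {z\<in>V. cyc3 pos b z c})"
    for b c d
  define P where "P = (\<lambda>(b,c,d). b \<in> T \<and> c \<in> T \<and> d \<in> T \<and> E b c \<and> E c d \<and> b \<noteq> d)"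
  have nb: "\<exists>w. w \<in> T \<and> E x w \<and> w \<noteq> y" if "x \<in> T" for x y
    using deg that by (metis (full_types))
  obtain u where u: "u \<in> T" "E v u" using nb[OF v] by blast
  obtain d0 where d0: "d0 \<in> T" "E u d0" "d0 \<noteq> v" using nb[OF u(1)] by blast
  have "P (v,u,d0)" unfolding P_def using v u d0 by auto
  from ex_has_least_nat[of P "(v,u,d0)" "\<lambda>(b,c,d). card (Arc b c d)", OF this]
  obtain t where t: "P t" "\<And>y. P y \<Longrightarrow> (\<lambda>(b,c,d). card (Arc b c d)) t \<le> (\<lambda>(b,c,d). card (Arc b c d)) y"
    by blast
  obtain b c d where bcd: "t = (b,c,d)" by (cases t) auto
  have Pb: "b \<in> T" "c \<in> T" "d \<in> T" "E b c" "E c d" "b \<noteq> d" using t(1) bcd unfolding P_def by auto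
  obtain e where e: "e \<in> T" "E d e" "e \<noteq> c" using nb[OF Pb(3)] by blast
  have bc: "b \<noteq> c" "c \<noteq> d" "d \<noteq> e" using Pb e irrE by metis+
  have nbd: "\<not> E b d" using no_tri Pb by blast
  have be: "b \<noteq> e" using nbd e symE by blast
  have nce: "\<not> E c e" using no_tri Pb e by blast
  have nbe: "\<not> E b e"
  proof
    assume "E b e"
    then show False using no_c4[of b c d e] Pb e bc be nbd nce symE by auto
  qed
  have sep: "cyc3 pos c b d \<longleftrightarrow> \<not> cyc3 pos c e d"
    using p4sep[of b c d e] Pb e bc be nbd nce nbe by auto
  have vV: "b \<in> V" "c \<in> V" "d \<in> V" "e \<in> V" using Pb e TV by auto
  have pp: "pos b \<noteq> pos c" "pos c \<noteq> pos d" "pos d \<noteq> pos e" "pos b \<noteq> pos d" "pos b \<noteq> pos e"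
    "pos c \<noteq> pos e" using pneq vV bc be Pb e by auto
  have sub: "Arc c d e \<subset> Arc b c d"
  proof (cases "cyc3 pos c d b")
    case True
    then have "\<not> cyc3 pos c b d" by (rule cyc3_asym)
    then have "cyc3 pos c e d" using sep by blast
    then have "cyc3 pos d c e" by (rule cyc3_rot[OF cyc3_rot])
    then have "\<not> cyc3 pos d e c" by (rule cyc3_asym)
    then have A1: "Arc c d e = {z\<in>V. cyc3 pos c z d}" unfolding Arc_def by simp
    have A2: "Arc b c d = {z\<in>V. cyc3 pos c z b}" using True unfolding Arc_def by simp
    show ?thesis unfolding A1 A2
    proof (rule psubsetI)
      show "{z \<in> V. cyc3 pos c z d} \<subseteq> {z \<in> V. cyc3 pos c z b}"
        using cyc3_trans[OF _ True] by auto
      have "d \<in> {z \<in> V. cyc3 pos c z b}" using True vV by simp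
      moreover have "d \<notin> {z \<in> V. cyc3 pos c z d}" by (simp add: cyc3_irr)
      ultimately show "{z \<in> V. cyc3 pos c z d} \<noteq> {z \<in> V. cyc3 pos c z b}" by blast
    qed
  next
    case False
    then have "cyc3 pos c b d" using cyc3_tot[of pos c b d] pp by fastforce
    then have "\<not> cyc3 pos c e d" using sep by blast
    then have "cyc3 pos c d e" using cyc3_tot[of pos c d e] pp by fastforce
    then have "cyc3 pos d e c" by (rule cyc3_rot)
    then have A1: "Arc c d e = {z\<in>V. cyc3 pos d z c}" unfolding Arc_def by simp
    have A2: "Arc b c d = {z\<in>V. cyc3 pos b z c}" using False unfolding Arc_def by simp
    have bdc: "cyc3 pos b d c" using \<open>cyc3 pos c b d\<close> by (rule cyc3_rot)
    show ?thesis unfolding A1 A2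
    proof (rule psubsetI)
      show "{z \<in> V. cyc3 pos d z c} \<subseteq> {z \<in> V. cyc3 pos b z c}"
      proof
        fix z assume "z \<in> {z \<in> V. cyc3 pos d z c}"
        then have "z \<in> V" "cyc3 pos c d z" using cyc3_rot[OF cyc3_rot, of pos d z c] by auto
        moreover have "cyc3 pos c b d" using \<open>cyc3 pos c b d\<close> .
        ultimately have "cyc3 pos c b z" using cyc3_trans[of pos c b d z] by auto
        then show "z \<in> {z \<in> V. cyc3 pos b z c}" using \<open>z \<in> V\<close> cyc3_rot[of pos c b z] by auto
      qed
      have "d \<in> {z \<in> V. cyc3 pos b z c}" using bdc vV by simp
      moreover have "d \<notin> {z \<in> V. cyc3 pos d z c}" by (simp add: cyc3_irr)
      ultimately show "{z \<in> V. cyc3 pos d z c} \<noteq> {z \<in> V. cyc3 pos b z c}" by blast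
    qed
  qed
  have "card (Arc c d e) < card (Arc b c d)"
    by (rule psubset_card_mono[OF _ sub]) (use fin in \<open>auto simp: Arc_def\<close>)
  moreover have "P (c,d,e)" unfolding P_def using Pb e bc by auto
  ultimately show False using t(2)[of "(c,d,e)"] bcd by auto
qed

end




definition cmp :: "'a set \<Rightarrow> ('a \<Rightarrow> 'a \<Rightarrow> bool) \<Rightarrow> 'a \<Rightarrow> 'a set" where
  "cmp V E x = {y \<in> V. E\<^sup>*\<^sup>* x y}"

lemma indE: "simple_graph V E \<Longrightarrow> induced E V = E"
  unfolding induced_def simple_graph_def by (auto simp: fun_eq_iff)

lemma components_cmp: "simple_graph V E \<Longrightarrow> components V E = {cmp V E x | x. x \<in> V}"
  unfolding components_def cmp_def by (simp add: indE)

lemma rt_sym: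
  assumes "\<And>a b. E a b \<Longrightarrow> E b a" "E\<^sup>*\<^sup>* x y" shows "E\<^sup>*\<^sup>* y x"
  using assms(2)
proof (induction rule: rtranclp_induct)
  case base then show ?case by simp
next
  case (step y z)
  then show ?case using assms(1) by (meson converse_rtranclp_into_rtranclp)
qed

lemma induced_idem: "induced (induced E C) C = induced E C"
  unfolding induced_def by (auto simp: fun_eq_iff)

context
  fixes V :: "'a set" and E :: "'a \<Rightarrow> 'a \<Rightarrow> bool"
  assumes sg: "simple_graph V E"
begin

lemma symE': "E a b \<Longrightarrow> E b a" using sg unfolding simple_graph_def by blast
lemma irrE': "\<not> E a a" using sg unfolding simple_graph_def by blast
lemma EV': "E a b \<Longrightarrow> a \<in> V \<and> b \<in> V" using sg unfolding simple_graph_def by blast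
lemma finV: "finite V" using sg unfolding simple_graph_def by blast

lemma cmp_self: "x \<in> V \<Longrightarrow> x \<in> cmp V E x"
  unfolding cmp_def by simp

lemma cmp_sub: "cmp V E x \<subseteq> V" unfolding cmp_def by auto

lemma cmp_same: "a \<in> cmp V E x \<Longrightarrow> cmp V E a = cmp V E x"
proof -
  assume "a \<in> cmp V E x"
  then have xa: "E\<^sup>*\<^sup>* x a" unfolding cmp_def by simp
  have ax: "E\<^sup>*\<^sup>* a x" using rt_sym[OF symE' xa] by blast
  show ?thesis unfolding cmp_def using xa ax by (auto intro: rtranclp_trans)
qed

lemma cmp_closed: "a \<in> cmp V E x \<Longrightarrow> E a b \<Longrightarrow> b \<in> cmp V E x"
  unfolding cmp_def using EV' by (auto intro: rtranclp.rtrancl_into_rtrancl)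

lemma cmp_nb: "v \<in> cmp V E x \<Longrightarrow> {u \<in> cmp V E x. induced E (cmp V E x) v u} = {u \<in> V. E v u}"
  unfolding induced_def using cmp_closed EV' by auto

lemma leaves_cmp: "leaves (cmp V E x) (induced E (cmp V E x)) = {v \<in> cmp V E x. card {u \<in> V. E v u} = 1}"
  unfolding leaves_def using cmp_nb by auto

lemma conn_cmp: "x \<in> V \<Longrightarrow> connected_graph (cmp V E x) (induced E (cmp V E x))"
proof -
  assume xV: "x \<in> V"
  define C where "C = cmp V E x"
  have r: "(induced E C)\<^sup>*\<^sup>* x y" if "E\<^sup>*\<^sup>* x y" for y
    using that
  proof (induction rule: rtranclp_induct)
    case base then show ?case by simp
  next
    case (step y z)
    have "y \<in> C" using step(1) EV'[OF step(2)] unfolding C_def cmp_def by auto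
    moreover have "z \<in> C" using cmp_closed calculation step(2) unfolding C_def by blast
    ultimately have "induced E C y z" using step(2) unfolding induced_def by simp
    then show ?case using step(3) by (meson rtranclp.rtrancl_into_rtrancl)
  qed
  have s: "induced E C a b \<Longrightarrow> induced E C b a" for a b unfolding induced_def using symE' by blast
  show ?thesis unfolding connected_graph_def induced_idem C_def[symmetric]
  proof (intro ballI)
    fix a b assume "a \<in> C" "b \<in> C"
    then have "(induced E C)\<^sup>*\<^sup>* x a" "(induced E C)\<^sup>*\<^sup>* x b" using r unfolding C_def cmp_def by auto
    then show "(induced E C)\<^sup>*\<^sup>* a b" using rt_sym[of "induced E C", OF s] by (meson rtranclp_trans)
  qed
qed

lemma cycle_deg2:
  assumes "has_cycle C (induced E C)"
  shows "\<exists>T. T \<noteq> {} \<and> T \<subseteq> C \<and> (\<forall>v\<in>T. \<exists>u w. u \<noteq> w \<and> u \<in> T \<and> w \<in> T \<and> E v u \<and> E v w)"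
proof -
  obtain xs where xs: "length xs \<ge> 3" "distinct xs" "set xs \<subseteq> C"
    "\<And>i. i < length xs \<Longrightarrow> induced E C (xs ! i) (xs ! ((i + 1) mod length xs))"
    using assms unfolding has_cycle_def by blast
  define n where "n = length xs"
  have ed: "E (xs ! i) (xs ! ((i + 1) mod n))" if "i < n" for i
    using xs(4)[of i] that unfolding induced_def n_def by simp
  show ?thesis
  proof (rule exI[of _ "set xs"], intro conjI ballI)
    show "set xs \<noteq> {}" using xs(1) by auto
    show "set xs \<subseteq> C" by fact
    fix v assume "v \<in> set xs"
    then obtain i where i: "i < n" "v = xs ! i" unfolding n_def by (auto simp: in_set_conv_nth)
    define p where "p = (if i = 0 then n - 1 else i - 1)"
    define q where "q = (if i = n - 1 then 0 else i + 1)"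
    have pn: "p < n" "q < n" unfolding p_def q_def using i xs(1) n_def by auto
    have pq: "p \<noteq> q" unfolding p_def q_def using i xs(1) n_def by auto
    have "(p + 1) mod n = i" unfolding p_def using i xs(1) n_def by auto
    then have e1: "E (xs ! p) v" using ed[OF pn(1)] i by simp
    have "(i + 1) mod n = q"
    proof (cases "i = n - 1")
      case True
      then have "i + 1 = n" using xs(1) n_def by simp
      then show ?thesis using True unfolding q_def by simp
    next
      case False
      then show ?thesis using i unfolding q_def by simp
    qed
    then have e2: "E v (xs ! q)" using ed[OF i(1)] i by simp
    show "\<exists>u w. u \<noteq> w \<and> u \<in> set xs \<and> w \<in> set xs \<and> E v u \<and> E v w"
      apply (rule exI[of _ "xs ! p"], rule exI[of _ "xs ! q"])
      using pn pq e1 e2 symE' xs(2) n_def by (auto simp: nth_eq_iff_index_eq)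
  qed
qed

end




context
  fixes V :: "'a set" and E :: "'a \<Rightarrow> 'a \<Rightarrow> bool" and pos :: "'a \<Rightarrow> nat"
  assumes sg: "simple_graph V E" and inj: "inj_on pos V" and cf: "CF_free V E pos"
begin

lemmas nd2 = no_deg2[OF sg inj cf]
lemmas ntri = no_tri[OF sg inj cf]
lemmas nc4 = no_c4[OF sg inj cf]
lemmas sep = p4sep[OF sg inj cf]
lemmas sy = symE'[OF sg]
lemmas ir = irrE'[OF sg]
lemmas ev = EV'[OF sg]

lemma pn: "a \<in> V \<Longrightarrow> b \<in> V \<Longrightarrow> a \<noteq> b \<Longrightarrow> pos a \<noteq> pos b"
  using inj by (meson inj_on_eq_iff)

lemma sep2:
  assumes "E v x" "E v y" "E x x'" "x' \<noteq> v" "x \<noteq> y"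
  shows "cyc3 pos v y x \<longleftrightarrow> \<not> cyc3 pos v x' x"
proof -
  have d1: "y \<noteq> v" "v \<noteq> x" "x \<noteq> x'" using assms ir by metis+
  have nyx: "\<not> E y x" using ntri assms sy by metis
  have nvx': "\<not> E v x'" using ntri assms by metis
  have yx': "y \<noteq> x'" using ntri assms sy by metis
  have nyx': "\<not> E y x'"
  proof
    assume "E y x'"
    then show False using nc4[of y v x x'] assms d1 yx' nyx nvx' sy[OF assms(2)] sy[OF \<open>E y x'\<close>] by auto
  qed
  show ?thesis using sep[of y v x x'] assms d1 yx' nyx nvx' nyx' sy[OF assms(2)] by auto
qed

lemma spider:
  assumes "E v x" "E v y" "E v z" "x \<noteq> y" "x \<noteq> z" "y \<noteq> z"
    "E x x'" "x' \<noteq> v" "E y y'" "y' \<noteq> v" "E z z'" "z' \<noteq> v"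
  shows False
proof -
  have h1: "cyc3 pos v y x \<longleftrightarrow> cyc3 pos v z x"
    using sep2[of v x y x'] sep2[of v x z x'] assms by auto
  have h2: "cyc3 pos v x y \<longleftrightarrow> cyc3 pos v z y"
    using sep2[of v y x y'] sep2[of v y z y'] assms by auto
  have h3: "cyc3 pos v x z \<longleftrightarrow> cyc3 pos v y z"
    using sep2[of v z x z'] sep2[of v z y z'] assms by auto
  have vV: "v \<in> V" "x \<in> V" "y \<in> V" "z \<in> V" using assms ev by auto
  have "v \<noteq> x" "v \<noteq> y" "v \<noteq> z" using assms ir by metis+
  then have p: "pos v \<noteq> pos x" "pos v \<noteq> pos y" "pos v \<noteq> pos z" "pos x \<noteq> pos y" "pos x \<noteq> pos z"
    "pos y \<noteq> pos z" using pn vV assms by auto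
  have t: "cyc3 pos v x y \<or> cyc3 pos v y x" "cyc3 pos v y z \<or> cyc3 pos v z y"
    "cyc3 pos v x z \<or> cyc3 pos v z x" using cyc3_tot p by metis+
  have a: "cyc3 pos v a b \<Longrightarrow> \<not> cyc3 pos v b a" for a b by (rule cyc3_asym)
  show False using h1 h2 h3 t a[of x y] a[of y x] a[of y z] a[of z y] a[of x z] a[of z x] by blast
qed


lemma path_part:
  assumes xV: "x \<in> V"
  defines "C \<equiv> cmp V E x"
  defines "S \<equiv> C - leaves C (induced E C)"
  shows "is_path_graph S (induced (induced E C) S)"
proof -
  have fin: "finite V" using finV[OF sg] .
  have CV: "C \<subseteq> V" unfolding C_def by (rule cmp_sub[OF sg])
  have Sdef: "S = {v \<in> C. card {u \<in> V. E v u} \<noteq> 1}"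
    unfolding S_def C_def leaves_cmp[OF sg] using sg by auto
  have SC: "S \<subseteq> C" using Sdef by auto
  have finS: "finite S" by (rule finite_subset[OF SC finite_subset[OF CV fin]])
  have ind: "induced (induced E C) S a b \<longleftrightarrow> E a b" if "a \<in> S" "b \<in> S" for a b
  proof -
    have "a \<in> C" "b \<in> C" using that SC by auto
    then show ?thesis using that by (simp add: induced_def)
  qed
  have onb: "\<exists>w'. E v w' \<and> w' \<noteq> w" if "v \<in> S" "E v w" for v w
  proof (rule ccontr)
    assume "\<not> ?thesis"
    then have "{u \<in> V. E v u} = {w}" using that(2) ev[OF that(2)] by blast
    then show False using that(1) Sdef by simp
  qed
  show ?thesis
  proof (cases "S = {}")
    case True
    then show ?thesis unfolding is_path_graph_def by (intro exI[of _ "[]"]) simp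
  next
    case False
    then obtain s where s: "s \<in> S" by auto
    define PS where "PS xs \<longleftrightarrow> distinct xs \<and> set xs \<subseteq> S \<and>
      (\<forall>i. Suc i < length xs \<longrightarrow> E (xs ! i) (xs ! Suc i))" for xs
    have P1: "PS [s]" unfolding PS_def using s by simp
    have bnd: "\<forall>xs. PS xs \<longrightarrow> length xs < Suc (card S)"
    proof (intro allI impI)
      fix xs assume "PS xs"
      then have "card (set xs) \<le> card S" "length xs = card (set xs)"
        unfolding PS_def using card_mono[OF finS] distinct_card by (auto simp del: distinct_card simp add: distinct_card[symmetric])
      then show "length xs < Suc (card S)" by simp
    qed
    obtain xs where xs: "PS xs" and mx: "\<And>ys. PS ys \<Longrightarrow> length ys \<le> length xs"
      using ex_has_greatest_nat[of PS "[s]" length, OF P1 bnd] by blast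
    have dx: "distinct xs" and sx: "set xs \<subseteq> S"
      and ex: "\<And>i. Suc i < length xs \<Longrightarrow> E (xs ! i) (xs ! Suc i)"
      using xs unfolding PS_def by auto
    have ne: "xs \<noteq> []" using mx[OF P1] by auto
    have chord: "\<not> E (xs ! i) (xs ! j)" if ij: "j < length xs" "i + 1 < j" for i j
    proof
      assume eij: "E (xs ! i) (xs ! j)"
      define T where "T = (\<lambda>k. xs ! k) ` {i..j}"
      have TV: "T \<subseteq> V"
      proof
        fix t assume "t \<in> T"
        then obtain m where "m \<le> j" "t = xs ! m" unfolding T_def by auto
        then have "t \<in> set xs" using ij by simp
        then show "t \<in> V" using sx SC CV by blast
      qed
      have "T = {}"
      proof (rule nd2[OF TV], intro ballI)
        fix v assume "v \<in> T"
        then obtain k where k: "i \<le> k" "k \<le> j" "v = xs ! k" unfolding T_def by auto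
        have inT: "xs ! m \<in> T" if "i \<le> m" "m \<le> j" for m unfolding T_def using that by auto
        have neq: "xs ! m \<noteq> xs ! m'" if "m < length xs" "m' < length xs" "m \<noteq> m'" for m m'
          using dx that by (simp add: nth_eq_iff_index_eq)
        consider "k = i" | "k = j" | "i < k \<and> k < j" using k by linarith
        then show "\<exists>u w. u \<noteq> w \<and> u \<in> T \<and> w \<in> T \<and> E v u \<and> E v w"
        proof cases
          case 1
          show ?thesis
            apply (rule exI[of _ "xs ! (i+1)"], rule exI[of _ "xs ! j"])
            using 1 k ij eij ex[of i] neq[of "i+1" j] inT[of "i+1"] inT[of j] by simp
        next
          case 2
          have e1: "E (xs ! (j - 1)) (xs ! j)" using ex[of "j-1"] ij by simp
          show ?thesis
            apply (rule exI[of _ "xs ! (j-1)"], rule exI[of _ "xs ! i"])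
            using 2 k ij eij e1 sy[OF e1] sy[OF eij] neq[of "j-1" i] inT[of "j-1"] inT[of i] by simp
        next
          case 3
          have ar: "k - 1 < length xs" "k - 1 \<noteq> k + 1" "i \<le> k - 1" "k - 1 \<le> j" "k + 1 \<le> j"
            "i \<le> k + 1" "k + 1 < length xs" using 3 ij by auto
          have e1: "E (xs ! (k - 1)) (xs ! k)" using ex[of "k-1"] ij 3 by simp
          have e2: "E (xs ! k) (xs ! (k+1))" using ex[of k] ij 3 by simp
          show ?thesis
            apply (rule exI[of _ "xs ! (k-1)"], rule exI[of _ "xs ! (k+1)"])
            using 3 k ij e1 e2 sy[OF e1] neq[OF ar(1) ar(7) ar(2)] inT[OF ar(3) ar(4)] inT[OF ar(6) ar(5)]
            by simp
        qed
      qed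
      then show False unfolding T_def using ij by auto
    qed
    have noext: False if w: "w \<in> S" "w \<notin> set xs" and k: "k < length xs" and e: "E (xs ! k) w" for w k
    proof -
      consider "k = 0" | "k = length xs - 1" | "0 < k \<and> k < length xs - 1" using k by linarith
      then show False
      proof cases
        case 1
        have "PS (w # xs)" unfolding PS_def
        proof (intro conjI allI impI)
          show "distinct (w # xs)" using dx w by simp
          show "set (w # xs) \<subseteq> S" using sx w by simp
          fix i assume "Suc i < length (w # xs)"
          then show "E ((w # xs) ! i) ((w # xs) ! Suc i)"
            using e 1 sy[OF e] ex by (cases i) auto
        qed
        then show False using mx by fastforce
      next
        case 2
        have "PS (xs @ [w])" unfolding PS_def
        proof (intro conjI allI impI)
          show "distinct (xs @ [w])" using dx w by simp
          show "set (xs @ [w]) \<subseteq> S" using sx w by simp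
          fix i assume i: "Suc i < length (xs @ [w])"
          show "E ((xs @ [w]) ! i) ((xs @ [w]) ! Suc i)"
          proof (cases "Suc i < length xs")
            case True then show ?thesis using ex by (simp add: nth_append)
          next
            case False
            then have "i = length xs - 1" "Suc i = length xs" using i by auto
            then show ?thesis using e 2 by (simp add: nth_append)
          qed
        qed
        then show False using mx by fastforce
      next
        case 3
        define v where "v = xs ! k"
        define a where "a = xs ! (k - 1)"
        define b where "b = xs ! (k + 1)"
        have "E a v" using ex[of "k-1"] 3 k unfolding v_def a_def by simp
        then have ea: "E v a" by (rule sy)
        have sk: "Suc k < length xs" using 3 by linarith
        have eb: "E v b" using ex[OF sk] unfolding v_def b_def by simp
        have ew: "E v w" using e unfolding v_def .
        have ab: "a \<noteq> b" unfolding a_def b_def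
          by (subst nth_eq_iff_index_eq[OF dx]) (use 3 sk in auto)
        have aw: "a \<noteq> w" "b \<noteq> w" using w 3 unfolding a_def b_def by auto
        have inS: "a \<in> S" "b \<in> S" using sx 3 unfolding a_def b_def by auto
        obtain a' where a': "E a a'" "a' \<noteq> v" using onb[OF inS(1) sy[OF ea]] by blast
        obtain b' where b': "E b b'" "b' \<noteq> v" using onb[OF inS(2) sy[OF eb]] by blast
        obtain w' where w': "E w w'" "w' \<noteq> v" using onb[OF w(1) sy[OF ew]] by blast
        show False using spider[OF ea eb ew ab aw a' b' w'] .
      qed
    qed
    define x0 where "x0 = xs ! 0"
    have x0S: "x0 \<in> S" using sx ne unfolding x0_def by auto
    then have x0C: "x0 \<in> C" using SC by auto
    have Cx0: "C = cmp V E x0" using cmp_same[OF sg x0C[unfolded C_def]] unfolding C_def by simp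
    define A where "A = set xs \<union> {l \<in> C. card {u \<in> V. E l u} = 1 \<and> (\<exists>a\<in>set xs. E l a)}"
    have reach: "y \<in> A" if "E\<^sup>*\<^sup>* x0 y" for y
      using that
    proof (induction rule: rtranclp_induct)
      case base then show ?case unfolding A_def x0_def using ne by simp
    next
      case (step y z)
      have yC: "y \<in> C" using step(3) sx SC unfolding A_def by blast
      have zC: "z \<in> C" using cmp_closed[OF sg yC[unfolded Cx0] step(2)] Cx0 by simp
      show ?case
      proof (cases "y \<in> set xs")
        case True
        show ?thesis
        proof (cases "z \<in> S")
          case True
          then show ?thesis
          proof (cases "z \<in> set xs")
            case False
            obtain k where "k < length xs" "y = xs ! k" using \<open>y \<in> set xs\<close> by (auto simp: in_set_conv_nth)
            then show ?thesis using noext[OF True False] step(2) by blast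
          qed (simp add: A_def)
        next
          case False
          then have "card {u \<in> V. E z u} = 1" using zC Sdef by auto
          then show ?thesis unfolding A_def using zC \<open>y \<in> set xs\<close> sy[OF step(2)] by blast
        qed
      next
        case False
        from step(3) False have "y \<in> {l \<in> C. card {u \<in> V. E l u} = 1 \<and> (\<exists>a\<in>set xs. E l a)}"
          unfolding A_def by simp
        then obtain a where a: "a \<in> set xs" "E y a" "card {u \<in> V. E y u} = 1" by blast
        have aV: "a \<in> V" using ev[OF a(2)] by simp
        have zV: "z \<in> V" using ev[OF step(2)] by simp
        have "a \<in> {u \<in> V. E y u}" "z \<in> {u \<in> V. E y u}" using a(2) step(2) aV zV by simp_all
        moreover obtain q where "{u \<in> V. E y u} = {q}" using a(3) card_1_singleton_iff[of "{u \<in> V. E y u}"] by auto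
        ultimately have "z = a" by simp
        then show ?thesis using a unfolding A_def by simp
      qed
    qed
    have Sxs: "set xs = S"
    proof
      show "set xs \<subseteq> S" by fact
      show "S \<subseteq> set xs"
      proof
        fix y assume yS: "y \<in> S"
        then have "E\<^sup>*\<^sup>* x0 y" using SC Cx0 unfolding cmp_def by auto
        then have "y \<in> A" by (rule reach)
        then show "y \<in> set xs" using yS Sdef unfolding A_def by auto
      qed
    qed
    show ?thesis unfolding is_path_graph_def
    proof (rule exI[of _ xs], intro conjI ballI)
      show "distinct xs" by fact
      show "set xs = S" by fact
      fix a b assume ab: "a \<in> S" "b \<in> S"
      show "induced (induced E C) S a b \<longleftrightarrow> (\<exists>i. Suc i < length xs \<and> {a, b} = {xs ! i, xs ! Suc i})"
        unfolding ind[OF ab]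
      proof
        assume eab: "E a b"
        obtain i where i: "i < length xs" "a = xs ! i" using ab Sxs by (auto simp: in_set_conv_nth)
        obtain j where j: "j < length xs" "b = xs ! j" using ab Sxs by (auto simp: in_set_conv_nth)
        have "i \<noteq> j" using i j eab ir by auto
        moreover have "\<not> i + 1 < j" using chord[OF j(1)] eab i j by auto
        moreover have "\<not> j + 1 < i" using chord[OF i(1), of j] sy[OF eab] i j by auto
        ultimately consider "j = i + 1" | "i = j + 1" by linarith
        then show "\<exists>i. Suc i < length xs \<and> {a, b} = {xs ! i, xs ! Suc i}"
        proof cases
          case 1 then show ?thesis using i j by (intro exI[of _ i]) auto
        next
          case 2 then show ?thesis using i j by (intro exI[of _ j]) auto
        qed
      next
        assume "\<exists>i. Suc i < length xs \<and> {a, b} = {xs ! i, xs ! Suc i}"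
        then obtain i where i: "Suc i < length xs" "{a, b} = {xs ! i, xs ! Suc i}" by blast
        then show "E a b" using ex[OF i(1)] sy[OF ex[OF i(1)]] by (auto simp: doubleton_eq_iff)
      qed
    qed
  qed
qed

lemma cat_comp:
  assumes xV: "x \<in> V"
  shows "is_caterpillar (cmp V E x) (induced E (cmp V E x))"
  unfolding is_caterpillar_def is_tree_def
proof (intro conjI)
  show "cmp V E x \<noteq> {}" using cmp_self[OF sg xV] by blast
  show "connected_graph (cmp V E x) (induced E (cmp V E x))" by (rule conn_cmp[OF sg xV])
  show "\<not> has_cycle (cmp V E x) (induced E (cmp V E x))"
  proof
    assume "has_cycle (cmp V E x) (induced E (cmp V E x))"
    from cycle_deg2[OF sg this] obtain T where T: "T \<noteq> {}" "T \<subseteq> cmp V E x"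
      "\<forall>v\<in>T. \<exists>u w. u \<noteq> w \<and> u \<in> T \<and> w \<in> T \<and> E v u \<and> E v w" by blast
    have "T \<subseteq> V" using T(2) cmp_sub[OF sg] by blast
    then show False using nd2 T by blast
  qed
  show "is_path_graph (cmp V E x - leaves (cmp V E x) (induced E (cmp V E x)))
     (induced (induced E (cmp V E x)) (cmp V E x - leaves (cmp V E x) (induced E (cmp V E x))))"
    using path_part[OF xV] by simp
qed

lemma dirB: "caterpillar_forest V E"
  unfolding caterpillar_forest_def components_cmp[OF sg] using cat_comp by blast

end




lemma arith_nc:
  fixes ja ta jb tb jc tc jd td ca cc :: nat
  assumes ab: "(ta = 0 \<and> tb = 0 \<and> (jb = ja + 1 \<or> ja = jb + 1)) \<or> (ta \<noteq> 0 \<and> tb = 0 \<and> ja = jb) \<or> (ta = 0 \<and> tb \<noteq> 0 \<and> ja = jb)"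
  and cd: "(tc = 0 \<and> td = 0 \<and> (jd = jc + 1 \<or> jc = jd + 1)) \<or> (tc \<noteq> 0 \<and> td = 0 \<and> jc = jd) \<or> (tc = 0 \<and> td \<noteq> 0 \<and> jc = jd)"
  and pa: "ta = 0 \<longleftrightarrow> even ja" and pc: "tc = 0 \<longleftrightarrow> even jc"
  and pb: "tb = 0 \<longleftrightarrow> odd jb" and pd: "td = 0 \<longleftrightarrow> odd jd"
  and lt1: "(0::int, int ca, int ja, int ta) < (0, int cc, int jc, int tc)"
  and lt2: "(1::int, - int ca, - int jb, - int tb) < (1, - int cc, - int jd, - int td)"
  shows False
proof -
  have l1: "ca < cc \<or> (ca = cc \<and> (ja < jc \<or> (ja = jc \<and> ta < tc)))" using lt1 by (auto simp: less_prod_def')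
  have l2: "cc < ca \<or> (cc = ca \<and> (jd < jb \<or> (jd = jb \<and> td < tb)))" using lt2 by (auto simp: less_prod_def')
  from l1 l2 have c: "ca = cc" "ja < jc \<or> (ja = jc \<and> ta < tc)" "jd < jb \<or> (jd = jb \<and> td < tb)" by auto
  show False using ab cd pa pb pc pd c(2,3) by presburger
qed


lemma cw_cyc4:
  assumes "clockwise pos [w,x,y,z]" shows "cyc4 pos w x y z"
proof -
  obtain r where r: "sorted_wrt (\<lambda>a b. pos a < pos b) (rotate r [w,x,y,z])"
    using assms unfolding clockwise_def by blast
  have rr: "rotate r [w,x,y,z] = rotate (r mod 4) [w,x,y,z]" by (subst rotate_conv_mod) simp
  have "r mod 4 < 4" by simp
  then consider "r mod 4 = 0" | "r mod 4 = 1" | "r mod 4 = 2" | "r mod 4 = 3" by linarith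
  then show ?thesis
  proof cases
    case 1 then show ?thesis using r rr unfolding cyc4_def by simp
  next
    case 2
    have "rotate 1 [w,x,y,z] = [x,y,z,w]" by simp
    then show ?thesis using r rr 2 unfolding cyc4_def by simp
  next
    case 3
    have "rotate 2 [w,x,y,z] = [y,z,w,x]" by (simp add: rotate_def eval_nat_numeral)
    then show ?thesis using r rr 3 unfolding cyc4_def by simp
  next
    case 4
    have "rotate 3 [w,x,y,z] = [z,w,x,y]" by (simp add: rotate_def eval_nat_numeral)
    then show ?thesis using r rr 4 unfolding cyc4_def by simp
  qed
qed

lemma cp4_elim:
  assumes "contains_pattern V E pos 4 F"
  shows "\<exists>w x y z. w \<in> V \<and> x \<in> V \<and> y \<in> V \<and> z \<in> V \<and> distinct [w,x,y,z] \<and> cyc4 pos w x y z \<and>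
    (E w x \<longleftrightarrow> {0,1} \<in> F) \<and> (E w y \<longleftrightarrow> {0,2} \<in> F) \<and> (E w z \<longleftrightarrow> {0,3} \<in> F) \<and>
    (E x y \<longleftrightarrow> {1,2} \<in> F) \<and> (E x z \<longleftrightarrow> {1,3} \<in> F) \<and> (E y z \<longleftrightarrow> {2,3} \<in> F)"
proof -
  obtain xs where xs: "length xs = 4" "set xs \<subseteq> V" "clockwise pos xs"
    "\<And>i j. i < 4 \<Longrightarrow> j < 4 \<Longrightarrow> i \<noteq> j \<Longrightarrow> E (xs ! i) (xs ! j) \<longleftrightarrow> {i, j} \<in> F"
    using assms unfolding contains_pattern_def by blast
  from xs(1) obtain a b c d where e: "xs = [a,b,c,d]"
    by (auto simp: eval_nat_numeral length_Suc_conv)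
  show ?thesis
  proof (rule exI[of _ a], rule exI[of _ b], rule exI[of _ c], rule exI[of _ d], intro conjI)
    show "a \<in> V" "b \<in> V" "c \<in> V" "d \<in> V" using xs(2) e by auto
    show "distinct [a,b,c,d]" using xs(3) e unfolding clockwise_def by metis
    show "cyc4 pos a b c d" using cw_cyc4 xs(3) e by metis
  qed (use xs(4)[of 0 1] xs(4)[of 0 2] xs(4)[of 0 3] xs(4)[of 1 2] xs(4)[of 1 3] xs(4)[of 2 3] e
      in \<open>simp_all add: eval_nat_numeral\<close>)
qed

lemma cp3_elim:
  assumes "contains_pattern V E pos 3 F"
  shows "\<exists>x y z. (E x y \<longleftrightarrow> {0,1} \<in> F) \<and> (E x z \<longleftrightarrow> {0,2} \<in> F) \<and> (E y z \<longleftrightarrow> {1,2} \<in> F)"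
proof -
  obtain xs where xs: "\<And>i j. i < 3 \<Longrightarrow> j < 3 \<Longrightarrow> i \<noteq> j \<Longrightarrow> E (xs ! i) (xs ! j) \<longleftrightarrow> {i, j} \<in> F"
    using assms unfolding contains_pattern_def by blast
  show ?thesis by (rule exI[of _ "xs!0"], rule exI[of _ "xs!1"], rule exI[of _ "xs!2"], intro conjI) (use xs in auto)
qed

lemma layout_cf:
  assumes sg: "simple_graph V E" and inj: "inj_on pos V"
    and bip: "\<And>a b. E a b \<Longrightarrow> L a \<noteq> L b"
    and ord: "\<And>a b. a \<in> V \<Longrightarrow> b \<in> V \<Longrightarrow> L a \<Longrightarrow> \<not> L b \<Longrightarrow> pos a < pos b"
    and nc: "\<And>a b c d. E a b \<Longrightarrow> E c d \<Longrightarrow> L a \<Longrightarrow> L c \<Longrightarrow> \<not> L b \<Longrightarrow> \<not> L d \<Longrightarrow>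
       pos a < pos c \<Longrightarrow> pos b < pos d \<Longrightarrow> False"
  shows "CF_free V E pos"
proof -
  have sy: "E a b \<Longrightarrow> E b a" for a b using sg unfolding simple_graph_def by blast
  have pn: "a \<in> V \<Longrightarrow> b \<in> V \<Longrightarrow> a \<noteq> b \<Longrightarrow> pos a \<noteq> pos b" for a b
    using inj by (meson inj_on_eq_iff)
  have P1: "\<not> contains_pattern V E pos 3 {{0,1},{1,2},{2,0}}"
  proof
    assume "contains_pattern V E pos 3 {{0,1},{1,2},{2,0}}"
    from cp3_elim[OF this] obtain x y z where "E x y" "E x z" "E y z"
      by (auto simp: doubleton_eq_iff)
    then show False using bip by metis
  qed
  have alt: False if "w \<in> V" "x \<in> V" "y \<in> V" "z \<in> V" "cyc4 pos w x y z"
    "E w x" "E x y" "E y z" for w x y z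
  proof -
    have l: "L w = L y" "L x = L z" "L w \<noteq> L x" using bip that(6-8) by metis+
    show False
    proof (cases "L w")
      case True
      then have "pos w < pos x" "pos w < pos z" "pos y < pos x" "pos y < pos z"
        using ord l that(1-4) by auto
      then show False using that(5) unfolding cyc4_def by linarith
    next
      case False
      then have "pos x < pos w" "pos z < pos w" "pos x < pos y" "pos z < pos y"
        using ord l that(1-4) by auto
      then show False using that(5) unfolding cyc4_def by linarith
    qed
  qed
  have P2: "\<not> contains_pattern V E pos 4 {{0,1},{1,2},{2,3},{3,0}}"
  proof
    assume "contains_pattern V E pos 4 {{0,1},{1,2},{2,3},{3,0}}"
    from cp4_elim[OF this] obtain w x y z where "w \<in> V" "x \<in> V" "y \<in> V" "z \<in> V"
      "cyc4 pos w x y z" "E w x" "E x y" "E y z"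
      by (auto simp: doubleton_eq_iff)
    then show False using alt by blast
  qed
  have P4: "\<not> contains_pattern V E pos 4 {{0,1},{1,2},{2,3}}"
  proof
    assume "contains_pattern V E pos 4 {{0,1},{1,2},{2,3}}"
    from cp4_elim[OF this] obtain w x y z where "w \<in> V" "x \<in> V" "y \<in> V" "z \<in> V"
      "cyc4 pos w x y z" "E w x" "E x y" "E y z"
      by (auto simp: doubleton_eq_iff)
    then show False using alt by blast
  qed
  have P3: "\<not> contains_pattern V E pos 4 {{0,1},{1,3},{3,2},{2,0}}"
  proof
    assume "contains_pattern V E pos 4 {{0,1},{1,3},{3,2},{2,0}}"
    from cp4_elim[OF this] obtain w x y z where v: "w \<in> V" "x \<in> V" "y \<in> V" "z \<in> V"
      and d: "distinct [w,x,y,z]" and e: "E w x" "E x z" "E y z" "E w y"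
      by (auto simp: doubleton_eq_iff)
    have l: "L w = L z" "L x = L y" "L w \<noteq> L x" using bip e by metis+
    have p: "pos w \<noteq> pos z" "pos x \<noteq> pos y" using pn v d by auto
    show False
    proof (cases "L w")
      case True
      then have t: "L w" "L z" "\<not> L x" "\<not> L y" using l by auto
      have "\<not> (pos w < pos z \<and> pos x < pos y)" using nc[OF e(1) sy[OF e(3)]] t by blast
      moreover have "\<not> (pos z < pos w \<and> pos y < pos x)" using nc[OF sy[OF e(3)] e(1)] t by blast
      moreover have "\<not> (pos w < pos z \<and> pos y < pos x)" using nc[OF e(4) sy[OF e(2)]] t by blast
      moreover have "\<not> (pos z < pos w \<and> pos x < pos y)" using nc[OF sy[OF e(2)] e(4)] t by blast
      ultimately show False using p by linarith
    next
      case False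
      then have t: "\<not> L w" "\<not> L z" "L x" "L y" using l by auto
      have "\<not> (pos x < pos y \<and> pos w < pos z)" using nc[OF sy[OF e(1)] e(3)] t by blast
      moreover have "\<not> (pos y < pos x \<and> pos z < pos w)" using nc[OF e(3) sy[OF e(1)]] t by blast
      moreover have "\<not> (pos x < pos y \<and> pos z < pos w)" using nc[OF e(2) sy[OF e(4)]] t by blast
      moreover have "\<not> (pos y < pos x \<and> pos w < pos z)" using nc[OF sy[OF e(4)] e(2)] t by blast
      ultimately show False using p by linarith
    qed
  qed
  have P5: "\<not> contains_pattern V E pos 4 {{2,0},{0,3},{3,1}}"
  proof
    assume "contains_pattern V E pos 4 {{2,0},{0,3},{3,1}}"
    from cp4_elim[OF this] obtain w x y z where v: "w \<in> V" "x \<in> V" "y \<in> V" "z \<in> V"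
      and c: "cyc4 pos w x y z" and e: "E w y" "E w z" "E x z"
      by (auto simp: doubleton_eq_iff)
    have l: "L w = L x" "L y = L z" "L w \<noteq> L y" using bip e by metis+
    show False
    proof (cases "L w")
      case True
      then have t: "L w" "L x" "\<not> L y" "\<not> L z" using l by auto
      have o: "pos w < pos y" "pos w < pos z" "pos x < pos y" "pos x < pos z" using ord v t by auto
      have "\<not> (pos w < pos x \<and> pos y < pos z)" using nc[OF e(1) e(3)] t by blast
      then show False using o c unfolding cyc4_def by linarith
    next
      case False
      then have t: "\<not> L w" "\<not> L x" "L y" "L z" using l by auto
      have o: "pos y < pos w" "pos z < pos w" "pos y < pos x" "pos z < pos x" using ord v t by auto
      have "\<not> (pos y < pos z \<and> pos w < pos x)" using nc[OF sy[OF e(1)] sy[OF e(3)]] t by blast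
      then show False using o c unfolding cyc4_def by linarith
    qed
  qed
  show ?thesis unfolding CF_free_def CF_def using P1 P2 P3 P4 P5 by simp
qed




definition good :: "'a set \<Rightarrow> ('a \<Rightarrow> 'a \<Rightarrow> bool) \<Rightarrow> 'a set \<Rightarrow> 'a list \<Rightarrow> bool" where
  "good V E C xs \<longleftrightarrow> xs \<noteq> [] \<and> distinct xs \<and> set xs \<subseteq> C \<and>
    (\<forall>a\<in>set xs. \<forall>b\<in>set xs. E a b \<longleftrightarrow> (\<exists>i. Suc i < length xs \<and> {a,b} = {xs!i, xs!Suc i})) \<and>
    (\<forall>v\<in>C - set xs. \<exists>u\<in>set xs. \<forall>w. E v w \<longleftrightarrow> w = u)"

context
  fixes V :: "'a set" and E :: "'a \<Rightarrow> 'a \<Rightarrow> bool"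
  assumes sg: "simple_graph V E"
begin

lemmas sy2 = symE'[OF sg]
lemmas ir2 = irrE'[OF sg]
lemmas ev2 = EV'[OF sg]

lemma nb1: "card {u \<in> V. E v u} = 1 \<Longrightarrow> E v u \<Longrightarrow> (\<forall>w. E v w \<longleftrightarrow> w = u)"
proof -
  assume c: "card {u \<in> V. E v u} = 1" and e: "E v u"
  obtain q where q: "{u \<in> V. E v u} = {q}" using c card_1_singleton_iff[of "{u \<in> V. E v u}"] by auto
  have uV: "u \<in> V" using ev2[OF e] by simp
  have "u = q" using q e uV by blast
  show "\<forall>w. E v w \<longleftrightarrow> w = u"
  proof
    fix w
    show "E v w \<longleftrightarrow> w = u"
    proof
      assume "E v w"
      then have "w \<in> {u \<in> V. E v u}" using ev2 by blast
      then show "w = u" using q \<open>u = q\<close> by simp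
    qed (use e in simp)
  qed
qed

lemma pair_comp:
  assumes vC: "v \<in> cmp V E x" and nv: "\<forall>w. E v w \<longleftrightarrow> w = u" and nu: "\<forall>w. E u w \<longleftrightarrow> w = v"
  shows "cmp V E x = {u, v}"
proof -
  have vV: "v \<in> V" using vC cmp_sub[OF sg] by auto
  have uV: "u \<in> V" using ev2 nv by blast
  have C: "cmp V E x = cmp V E v" using cmp_same[OF sg vC] by simp
  have "y \<in> {u, v}" if "E\<^sup>*\<^sup>* v y" for y
    using that
  proof (induction rule: rtranclp_induct)
    case base then show ?case by simp
  next
    case (step y z)
    then show ?case using nv nu by auto
  qed
  then have "cmp V E v \<subseteq> {u, v}" unfolding cmp_def by auto
  moreover have "{u, v} \<subseteq> cmp V E v" using cmp_self[OF sg vV] cmp_closed[OF sg _ ] nv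
    by (metis empty_subsetI insert_subset)
  ultimately show ?thesis using C by blast
qed

lemma cat_good:
  assumes xV: "x \<in> V" and cat: "is_caterpillar (cmp V E x) (induced E (cmp V E x))"
  shows "\<exists>xs. good V E (cmp V E x) xs"
proof -
  define C where "C = cmp V E x"
  define S where "S = C - leaves C (induced E C)"
  have CV: "C \<subseteq> V" unfolding C_def by (rule cmp_sub[OF sg])
  have Sdef: "S = {v \<in> C. card {u \<in> V. E v u} \<noteq> 1}"
    unfolding S_def C_def leaves_cmp[OF sg] by auto
  have Cne: "C \<noteq> {}" using cat unfolding C_def is_caterpillar_def is_tree_def by blast
  obtain xs0 where xs0: "distinct xs0" "set xs0 = S"
    "\<And>a b. a \<in> S \<Longrightarrow> b \<in> S \<Longrightarrow> induced (induced E C) S a b \<longleftrightarrow> (\<exists>i. Suc i < length xs0 \<and> {a, b} = {xs0 ! i, xs0 ! Suc i})"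
    using cat unfolding C_def[symmetric] S_def[symmetric] is_caterpillar_def is_path_graph_def by blast
  have SC: "S \<subseteq> C" unfolding Sdef by auto
  have ind: "induced (induced E C) S a b \<longleftrightarrow> E a b" if "a \<in> S" "b \<in> S" for a b
  proof -
    have "a \<in> C" "b \<in> C" using that SC by auto
    then show ?thesis using that by (simp add: induced_def)
  qed
  have leafnb: "\<exists>u\<in>C. E v u \<and> card {u \<in> V. E u w} = card {u \<in> V. E u w} \<and> (\<forall>w. E v w \<longleftrightarrow> w = u)"
    if "v \<in> C" "v \<notin> S" for v w
  proof -
    have c1: "card {u \<in> V. E v u} = 1" using that Sdef by auto
    then obtain q where q: "{u \<in> V. E v u} = {q}" using card_1_singleton_iff[of "{u \<in> V. E v u}"] by auto
    then have eq: "E v q" by blast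
    have "q \<in> C" using cmp_closed[OF sg that(1)[unfolded C_def] eq] unfolding C_def .
    then show ?thesis using nb1[OF c1 eq] eq by blast
  qed
  have pairS: "S = {}" if "v \<in> C" "\<forall>w. E v w \<longleftrightarrow> w = u" "u \<notin> S" "u \<in> C" for u v
  proof -
    have euv: "E u v" using that(2) sy2 by blast
    have c1: "card {w \<in> V. E u w} = 1" using that(3,4) Sdef by auto
    have "C = {u, v}" using pair_comp[OF that(1)[unfolded C_def] that(2) nb1[OF c1 euv]] unfolding C_def .
    moreover have "v \<notin> S"
    proof
      assume "v \<in> S"
      then have "card {w \<in> V. E v w} \<noteq> 1" using Sdef by auto
      moreover have "{w \<in> V. E v w} = {u}" using that(2) ev2 by blast
      ultimately show False by simp
    qed
    ultimately show ?thesis using that(3) SC by auto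
  qed
  show ?thesis
  proof (cases "S = {}")
    case False
    show ?thesis unfolding C_def[symmetric] good_def
    proof (rule exI[of _ xs0], intro conjI ballI)
      show "xs0 \<noteq> []" using False xs0(2) by auto
      show "distinct xs0" by fact
      show "set xs0 \<subseteq> C" using xs0(2) SC by simp
      fix a b assume "a \<in> set xs0" "b \<in> set xs0"
      then show "E a b \<longleftrightarrow> (\<exists>i. Suc i < length xs0 \<and> {a, b} = {xs0 ! i, xs0 ! Suc i})"
        using xs0(3) ind xs0(2) by auto
    next
      fix v assume "v \<in> C - set xs0"
      then have v: "v \<in> C" "v \<notin> S" using xs0(2) by auto
      obtain u where u: "u \<in> C" "\<forall>w. E v w \<longleftrightarrow> w = u" using leafnb[OF v] by blast
      have "u \<in> S" using pairS[OF v(1) u(2) _ u(1)] False by blast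
      then show "\<exists>u\<in>set xs0. \<forall>w. E v w \<longleftrightarrow> w = u" using u xs0(2) by blast
    qed
  next
    case True
    obtain v where v: "v \<in> C" using Cne by auto
    have vS: "v \<notin> S" using True by simp
    obtain u where u: "u \<in> C" "\<forall>w. E v w \<longleftrightarrow> w = u" using leafnb[OF v vS] by blast
    have uS: "u \<notin> S" using True by simp
    have euv: "E u v" using u(2) sy2 by blast
    have c1: "card {w \<in> V. E u w} = 1" using uS u(1) Sdef by auto
    have nu: "\<forall>w. E u w \<longleftrightarrow> w = v" using nb1[OF c1 euv] .
    have Cuv: "C = {u, v}" using pair_comp[OF v[unfolded C_def] u(2) nu] unfolding C_def .
    have uv: "u \<noteq> v" using u(2) ir2 by blast
    show ?thesis unfolding C_def[symmetric] good_def
    proof (rule exI[of _ "[v]"], intro conjI ballI)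
      show "[v] \<noteq> []" by simp
      show "distinct [v]" by simp
      show "set [v] \<subseteq> C" using v by simp
      fix a b assume "a \<in> set [v]" "b \<in> set [v]"
      then show "E a b \<longleftrightarrow> (\<exists>i. Suc i < length [v] \<and> {a, b} = {[v] ! i, [v] ! Suc i})"
        using ir2 by auto
    next
      fix w assume "w \<in> C - set [v]"
      then have "w = u" using Cuv by auto
      then show "\<exists>u\<in>set [v]. \<forall>w'. E w w' \<longleftrightarrow> w' = u" using nu by simp
    qed
  qed
qed

end




lemma rank_less:
  fixes K :: "'a \<Rightarrow> 'b::linorder"
  assumes fin: "finite V" and u: "u \<in> V" and v: "v \<in> V"
  shows "card {w\<in>V. K w < K u} < card {w\<in>V. K w < K v} \<longleftrightarrow> K u < K v"
proof
  assume "K u < K v"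
  then have "{w\<in>V. K w < K u} \<subset> {w\<in>V. K w < K v}" using u by auto
  then show "card {w\<in>V. K w < K u} < card {w\<in>V. K w < K v}"
    by (rule psubset_card_mono[rotated]) (use fin in auto)
next
  assume c: "card {w\<in>V. K w < K u} < card {w\<in>V. K w < K v}"
  show "K u < K v"
  proof (rule ccontr)
    assume "\<not> K u < K v"
    then have "{w\<in>V. K w < K v} \<subseteq> {w\<in>V. K w < K u}" by auto
    then have "card {w\<in>V. K w < K v} \<le> card {w\<in>V. K w < K u}"
      by (rule card_mono[rotated]) (use fin in auto)
    then show False using c by simp
  qed
qed

lemma rank_inj:
  fixes K :: "'a \<Rightarrow> 'b::linorder"
  assumes fin: "finite V" and inj: "inj_on K V"
  shows "inj_on (\<lambda>v. card {w\<in>V. K w < K v}) V"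
proof (rule inj_onI)
  fix u v assume uv: "u \<in> V" "v \<in> V" "card {w\<in>V. K w < K u} = card {w\<in>V. K w < K v}"
  show "u = v"
  proof (rule ccontr)
    assume "u \<noteq> v"
    then have "K u \<noteq> K v" using inj uv by (meson inj_on_eq_iff)
    then have "K u < K v \<or> K v < K u" by auto
    then show False using rank_less[OF fin uv(1) uv(2), of K] rank_less[OF fin uv(2) uv(1), of K] uv(3) by auto
  qed
qed


lemma dirA:
  assumes sg: "simple_graph V E" and cf: "caterpillar_forest V E"
  shows "\<exists>pos :: 'a \<Rightarrow> nat. circular_ordering V pos \<and> CF_free V E pos"
proof -
  have fin: "finite V" by (rule finV[OF sg])
  have sy: "E a b \<Longrightarrow> E b a" for a b by (rule symE'[OF sg])
  have ev: "E a b \<Longrightarrow> a \<in> V \<and> b \<in> V" for a b by (rule EV'[OF sg])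
  have catx: "is_caterpillar (cmp V E x) (induced E (cmp V E x))" if "x \<in> V" for x
    using cf that unfolding caterpillar_forest_def components_cmp[OF sg] by blast
  obtain idx :: "'a \<Rightarrow> nat" where idx: "inj_on idx V"
    using finite_imp_inj_to_nat_seg[OF fin] by blast
  define X where "X v = (SOME xs. good V E (cmp V E v) xs)" for v
  have gX: "good V E (cmp V E v) (X v)" if "v \<in> V" for v
    unfolding X_def using cat_good[OF sg that catx[OF that]] by (rule someI_ex)
  have Xeq: "X u = X v" if "v \<in> V" "u \<in> cmp V E v" for u v
    unfolding X_def using cmp_same[OF sg that(2)] by simp
  have cmpeq: "cmp V E u = cmp V E v" if "v \<in> V" "u \<in> cmp V E v" for u v
    using cmp_same[OF sg that(2)] by simp
  define anc where "anc v = (if v \<in> set (X v) then v else (THE u. E v u))" for v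
  have anc: "anc v \<in> set (X v) \<and> (v \<notin> set (X v) \<longrightarrow> (\<forall>w. E v w \<longleftrightarrow> w = anc v))" if vV: "v \<in> V" for v
  proof (cases "v \<in> set (X v)")
    case True then show ?thesis unfolding anc_def by simp
  next
    case False
    have "v \<in> cmp V E v - set (X v)" using cmp_self[OF sg vV] False by simp
    then obtain u where u: "u \<in> set (X v)" "\<forall>w. E v w \<longleftrightarrow> w = u"
      using gX[OF vV] unfolding good_def by blast
    have th: "(THE u. E v u) = u" by (rule the_equality) (use u(2) in auto)
    have "anc v = u" unfolding anc_def using False th by simp
    then show ?thesis using u by simp
  qed
  define j where "j v = (THE i. i < length (X v) \<and> X v ! i = anc v)" for v
  have jidx: "j v = i" if "v \<in> V" "i < length (X v)" "X v ! i = anc v" for v i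
  proof -
    have d: "distinct (X v)" using gX[OF that(1)] unfolding good_def by simp
    show ?thesis unfolding j_def
    proof (rule the_equality)
      show "i < length (X v) \<and> X v ! i = anc v" using that by simp
      fix k assume "k < length (X v) \<and> X v ! k = anc v"
      then show "k = i" using that nth_eq_iff_index_eq[OF d, of k i] by simp
    qed
  qed
  have jv: "j v < length (X v) \<and> X v ! j v = anc v" if vV: "v \<in> V" for v
  proof -
    obtain i where "i < length (X v)" "X v ! i = anc v"
      using anc[OF vV] by (auto simp: in_set_conv_nth)
    then show ?thesis using jidx[OF vV] by simp
  qed
  define t where "t v = (if v \<in> set (X v) then 0 else Suc (idx v))" for v
  define cc where "cc v = Min (idx ` cmp V E v)" for v
  define lay where "lay v \<longleftrightarrow> (t v = 0 \<longleftrightarrow> even (j v))" for v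
  define K where "K v = (if lay v then (0::int, int (cc v), int (j v), int (t v))
     else (1, - int (cc v), - int (j v), - int (t v)))" for v
  define pos where "pos v = card {u\<in>V. K u < K v}" for v
  have t0: "t v = 0 \<longleftrightarrow> v \<in> set (X v)" for v unfolding t_def by simp
  have edge: "cc a = cc b \<and> ((t a = 0 \<and> t b = 0 \<and> (j b = j a + 1 \<or> j a = j b + 1)) \<or>
      (t a \<noteq> 0 \<and> t b = 0 \<and> j a = j b) \<or> (t a = 0 \<and> t b \<noteq> 0 \<and> j a = j b))"
    if eab: "E a b" for a b
  proof -
    have aV: "a \<in> V" and bV: "b \<in> V" using ev[OF eab] by auto
    have bC: "b \<in> cmp V E a" using cmp_closed[OF sg cmp_self[OF sg aV] eab] .
    have Xb: "X b = X a" using Xeq[OF aV bC] .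
    have ccb: "cc a = cc b" unfolding cc_def using cmpeq[OF aV bC] by simp
    define xs where "xs = X a"
    have Xa: "X a = xs" unfolding xs_def ..
    have Xb': "X b = xs" using Xb Xa by simp
    have g: "good V E (cmp V E a) xs" using gX[OF aV] unfolding xs_def .
    have gch: "\<And>a b. a \<in> set xs \<Longrightarrow> b \<in> set xs \<Longrightarrow> E a b \<longleftrightarrow> (\<exists>i. Suc i < length xs \<and> {a,b} = {xs!i, xs!Suc i})"
      using g unfolding good_def by blast
    have gsub: "set xs \<subseteq> cmp V E a" using g unfolding good_def by blast
    have jsp: "j v = i" if "v \<in> V" "X v = xs" "v \<in> set xs" "i < length xs" "xs ! i = v" for v i
      using jidx[OF that(1), of i] that unfolding anc_def by simp
    have jlf: "j v = j (anc v)" if "v \<in> V" "X v = xs" "v \<notin> set xs" for v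
    proof -
      have av: "anc v \<in> set xs" using anc[OF that(1)] that(2) by simp
      have acm: "anc v \<in> cmp V E a" using av gsub by blast
      have Xav: "X (anc v) = xs" using Xeq[OF aV acm] unfolding xs_def .
      have "anc (anc v) = anc v" using av Xav by (simp add: anc_def[of "anc v"])
      then show ?thesis unfolding j_def using Xav that(2) by simp
    qed
    consider "a \<in> set xs" "b \<in> set xs" | "a \<notin> set xs" | "a \<in> set xs" "b \<notin> set xs" by blast
    then show ?thesis
    proof cases
      case 1
      then obtain i where i: "Suc i < length xs" "{a, b} = {xs ! i, xs ! Suc i}"
        using gch[OF 1] eab by blast
      have ta: "t a = 0" "t b = 0" using 1 Xb unfolding t_def xs_def by auto
      from i(2) have "(a = xs ! i \<and> b = xs ! Suc i) \<or> (a = xs ! Suc i \<and> b = xs ! i)"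
        by (auto simp: doubleton_eq_iff)
      then show ?thesis
      proof
        assume h: "a = xs ! i \<and> b = xs ! Suc i"
        have "j a = i" by (rule jsp[OF aV Xa 1(1)]) (use h i(1) in auto)
        moreover have "j b = Suc i" by (rule jsp[OF bV Xb' 1(2)]) (use h i(1) in auto)
        ultimately show ?thesis using ta ccb by simp
      next
        assume h: "a = xs ! Suc i \<and> b = xs ! i"
        have "j a = Suc i" by (rule jsp[OF aV Xa 1(1)]) (use h i(1) in auto)
        moreover have "j b = i" by (rule jsp[OF bV Xb' 1(2)]) (use h i(1) in auto)
        ultimately show ?thesis using ta ccb by simp
      qed
    next
      case 2
      have "\<forall>w. E a w \<longleftrightarrow> w = anc a" using anc[OF aV] 2 unfolding xs_def by simp
      then have ba: "b = anc a" using eab by simp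
      have bs: "b \<in> set xs" using anc[OF aV] ba unfolding xs_def by simp
      have ta: "t a \<noteq> 0" "t b = 0" using 2 bs Xb unfolding t_def xs_def by auto
      have "j a = j b" using jlf[OF aV _ 2] ba unfolding xs_def by simp
      then show ?thesis using ta ccb by simp
    next
      case 3
      have "\<forall>w. E b w \<longleftrightarrow> w = anc b" using anc[OF bV] 3 Xb unfolding xs_def by simp
      then have ab: "a = anc b" using sy[OF eab] by simp
      have ta: "t a = 0" "t b \<noteq> 0" using 3 Xb unfolding t_def xs_def by auto
      have "j b = j a" using jlf[OF bV _ 3(2)] ab Xb unfolding xs_def by simp
      then show ?thesis using ta ccb by simp
    qed
  qed
  have injK: "inj_on K V"
  proof (rule inj_onI)
    fix u v assume uv: "u \<in> V" "v \<in> V" "K u = K v"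
    have l: "lay u = lay v" using uv(3) unfolding K_def by (auto split: if_splits)
    have c: "cc u = cc v" "j u = j v" "t u = t v" using uv(3) l unfolding K_def by (auto split: if_splits)
    have ne: "idx ` cmp V E u \<noteq> {}" "idx ` cmp V E v \<noteq> {}" using cmp_self[OF sg] uv by blast+
    have fi: "finite (idx ` cmp V E u)" "finite (idx ` cmp V E v)"
      using fin cmp_sub[OF sg] finite_subset by (metis finite_imageI)+
    obtain w where w: "w \<in> cmp V E u" "idx w = cc u" using Min_in[OF fi(1) ne(1)] unfolding cc_def by auto
    obtain w' where w': "w' \<in> cmp V E v" "idx w' = cc v" using Min_in[OF fi(2) ne(2)] unfolding cc_def by auto
    have "w = w'" using idx w w' c(1) cmp_sub[OF sg] by (metis inj_on_eq_iff subsetD)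
    then have cmpuv: "cmp V E u = cmp V E v" using cmpeq[OF uv(1) w(1)] cmpeq[OF uv(2) w'(1)] by simp
    have Xuv: "X u = X v" using Xeq[OF uv(2)] cmpuv cmp_self[OF sg uv(1)] by simp
    show "u = v"
    proof (cases "t u = 0")
      case True
      then have "u \<in> set (X u)" "v \<in> set (X v)" using c(3) t0[of u] t0[of v] by auto
      then have "anc u = u" "anc v = v" unfolding anc_def by auto
      then show ?thesis using jv[OF uv(1)] jv[OF uv(2)] Xuv c(2) by metis
    next
      case False
      then have "idx u = idx v" using c(3) unfolding t_def by (auto split: if_splits)
      then show ?thesis using idx uv by (meson inj_on_eq_iff)
    qed
  qed
  have rk: "pos u < pos v \<longleftrightarrow> K u < K v" if "u \<in> V" "v \<in> V" for u v
    unfolding pos_def using rank_less[OF fin that] .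
  have injp: "inj_on pos V" unfolding pos_def by (rule rank_inj[OF fin injK])
  have "CF_free V E pos"
  proof (rule layout_cf[OF sg injp, of lay])
    fix a b assume "E a b"
    from edge[OF this] show "lay a \<noteq> lay b" unfolding lay_def by auto
  next
    fix a b assume "a \<in> V" "b \<in> V" "lay a" "\<not> lay b"
    then show "pos a < pos b" using rk by (simp add: K_def less_prod_def')
  next
    fix a b c d assume h: "E a b" "E c d" "lay a" "lay c" "\<not> lay b" "\<not> lay d" "pos a < pos c" "pos b < pos d"
    have v: "a \<in> V" "b \<in> V" "c \<in> V" "d \<in> V" using h ev by auto
    have k1: "K a < K c" using rk v h by blast
    have k2: "K b < K d" using rk v h by blast
    have e1: "cc a = cc b" and e2: "cc c = cc d" using edge h by blast+
    show False
    proof (rule arith_nc[of "t a" "t b" "j b" "j a" "t c" "t d" "j d" "j c" "cc a" "cc c"])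
      show "(t a = 0 \<and> t b = 0 \<and> (j b = j a + 1 \<or> j a = j b + 1)) \<or> (t a \<noteq> 0 \<and> t b = 0 \<and> j a = j b) \<or> (t a = 0 \<and> t b \<noteq> 0 \<and> j a = j b)"
        using edge[OF h(1)] by blast
      show "(t c = 0 \<and> t d = 0 \<and> (j d = j c + 1 \<or> j c = j d + 1)) \<or> (t c \<noteq> 0 \<and> t d = 0 \<and> j c = j d) \<or> (t c = 0 \<and> t d \<noteq> 0 \<and> j c = j d)"
        using edge[OF h(2)] by blast
      show "t a = 0 \<longleftrightarrow> even (j a)" "t c = 0 \<longleftrightarrow> even (j c)" using h(3,4) unfolding lay_def by auto
      show "t b = 0 \<longleftrightarrow> odd (j b)" "t d = 0 \<longleftrightarrow> odd (j d)" using h(5,6) unfolding lay_def by auto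
      show "(0::int, int (cc a), int (j a), int (t a)) < (0, int (cc c), int (j c), int (t c))"
        using k1 h(3,4) unfolding K_def by simp
      show "(1::int, - int (cc a), - int (j b), - int (t b)) < (1, - int (cc c), - int (j d), - int (t d))"
        using k2 h(5,6) e1 e2 unfolding K_def by simp
    qed
  qed
  then show ?thesis using injp unfolding circular_ordering_def by blast
qed


theorem proposition6:
  fixes V :: "'a set" and E :: "'a \<Rightarrow> 'a \<Rightarrow> bool"
  assumes "simple_graph V E"
  shows "caterpillar_forest V E \<longleftrightarrow>
    (\<exists>pos :: 'a \<Rightarrow> nat. circular_ordering V pos \<and> CF_free V E pos)"
proof
  assume "caterpillar_forest V E"
  then show "\<exists>pos :: 'a \<Rightarrow> nat. circular_ordering V pos \<and> CF_free V E pos"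
    by (rule dirA[OF assms])
next
  assume "\<exists>pos :: 'a \<Rightarrow> nat. circular_ordering V pos \<and> CF_free V E pos"
  then obtain pos :: "'a \<Rightarrow> nat" where "inj_on pos V" "CF_free V E pos"
    unfolding circular_ordering_def by blast
  then show "caterpillar_forest V E" by (rule dirB[OF assms])
qed

end
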